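(* Assume $\lambda_{\max}(L_1)>\lambda_{\max}(L_2)$, that $\lambda_N^1:=\lambda_{\max}(L_1)$ is a simple eigenvalue of $L_1$ with eigenvector $v_N^1$, and that the nodal set $\{x: v_N^1(x)=0\}$ is non-empty. Let $c_1^*>0$ be the largest budget such that for $0\le c<c_1^*$ the optimal largest eigenvalue $\lambda_n^*(c)$ is simple, and let $W^*=\operatorname{diag}(w^* )$ where $w^*$ is an optimal weight at budget $c=c_1^*$. Define $\bar L=\frac{L_1+L_2}{2}-\lambda_N^1 I$, $\tilde L=\frac{L_1-L_2}{2}$ and $Q=\bar L-\tilde L\bar L^\dagger\tilde L$, where $\dagger$ denotes the Moore–Penrose pseudoinverse. Then the matrix $Q+2W^*$ has a zero eigenvalue.
   Context: A multiplex network consists of two layers $G_1,G_2$, simple undirected graphs on $N$ vertices each with Laplacians $L_1,L_2\in\mathbb{R}^{N\times N}$; the $i$-th vertex of $G_1$ is joined by an interlayer edge of weight $w_i\ge0$ to the $i$-th vertex of $G_2$. With $W=\operatorname{diag}(w)$, the multiplex Laplacian is $L(w)=\begin{bmatrix}L_1+W&-W\\-W&L_2+W\end{bmatrix}$. For a budget $c\ge0$, $\lambda_n^*(c)=\min\{\lambda_{\max}(L(w)):w\ge0,\ w^T\boldsymbol 1=c\}$, and a weight attaining this minimum is called optimal. *)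

theory Defs
  imports "Jordan_Normal_Form.Char_Poly"
begin

definition simple_graph :: "nat \<Rightarrow> (nat \<Rightarrow> nat \<Rightarrow> bool) \<Rightarrow> bool" where
  "simple_graph N E \<longleftrightarrow> (\<forall>i<N. \<not> E i i) \<and> (\<forall>i<N. \<forall>j<N. E i j \<longleftrightarrow> E j i)"

definition graph_laplacian :: "nat \<Rightarrow> (nat \<Rightarrow> nat \<Rightarrow> bool) \<Rightarrow> real mat" where
  "graph_laplacian N E = mat N N (\<lambda>(i,j).
      if i = j then real (card {k. k < N \<and> E i k})
      else if E i j then -1 else 0)"

definition multiplex_laplacian :: "nat \<Rightarrow> real mat \<Rightarrow> real mat \<Rightarrow> (nat \<Rightarrow> real) \<Rightarrow> real mat" where
  "multiplex_laplacian N L1 L2 w =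
     (let W = mat_diag N w in four_block_mat (L1 + W) (- W) (- W) (L2 + W))"

definition lambda_max :: "real mat \<Rightarrow> real" where
  "lambda_max A = Max {k. eigenvalue A k}"

definition simple_eigenvalue :: "real mat \<Rightarrow> real \<Rightarrow> bool" where
  "simple_eigenvalue A k \<longleftrightarrow> order k (char_poly A) = 1"

definition admissible_weight :: "nat \<Rightarrow> real \<Rightarrow> (nat \<Rightarrow> real) \<Rightarrow> bool" where
  "admissible_weight N c w \<longleftrightarrow> (\<forall>i<N. 0 \<le> w i) \<and> (\<Sum>i<N. w i) = c"

text \<open>lambda_n^*(c): the minimum (infimum, which is attained) of lambda_max(L(w)).\<close>
definition lambda_star :: "nat \<Rightarrow> real mat \<Rightarrow> real mat \<Rightarrow> real \<Rightarrow> real" where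
  "lambda_star N L1 L2 c =
     Inf {lambda_max (multiplex_laplacian N L1 L2 w) | w. admissible_weight N c w}"

definition optimal_weight :: "nat \<Rightarrow> real mat \<Rightarrow> real mat \<Rightarrow> real \<Rightarrow> (nat \<Rightarrow> real) \<Rightarrow> bool" where
  "optimal_weight N L1 L2 c w \<longleftrightarrow> admissible_weight N c w \<and>
     lambda_max (multiplex_laplacian N L1 L2 w) = lambda_star N L1 L2 c"

definition optimal_simple :: "nat \<Rightarrow> real mat \<Rightarrow> real mat \<Rightarrow> real \<Rightarrow> bool" where
  "optimal_simple N L1 L2 c \<longleftrightarrow> (\<forall>w. optimal_weight N L1 L2 c w \<longrightarrow>
      simple_eigenvalue (multiplex_laplacian N L1 L2 w) (lambda_star N L1 L2 c))"

definition pinv :: "real mat \<Rightarrow> real mat" where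
  "pinv A = (THE X. X \<in> carrier_mat (dim_col A) (dim_row A) \<and>
      A * X * A = A \<and> X * A * X = X \<and>
      transpose_mat (A * X) = A * X \<and> transpose_mat (X * A) = X * A)"

end

theory Submission
  imports Defs
begin


lemma real_sym_eigvec:
  fixes A :: "real mat"
  assumes A: "A \<in> carrier_mat n n" and sym: "transpose_mat A = A" and n: "n > 0"
  shows "\<exists>u lam. u \<in> carrier_vec n \<and> u \<noteq> 0\<^sub>v n \<and> A *\<^sub>v u = lam \<cdot>\<^sub>v u"
proof -
  define Ac where "Ac = map_mat complex_of_real A"
  have Ac: "Ac \<in> carrier_mat n n" using A by (simp add: Ac_def)
  have "degree (char_poly Ac) = n" using degree_monic_char_poly[OF Ac] by simp
  then obtain z where "poly (char_poly Ac) z = 0"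
    using fundamental_theorem_of_algebra[of "char_poly Ac"] n
    by (metis constant_degree neq0_conv)
  then have "eigenvalue Ac z" using eigenvalue_root_char_poly[OF Ac] by simp
  then obtain uc where ev: "eigenvector Ac uc z" unfolding eigenvalue_def by auto
  have uc: "uc \<in> carrier_vec n" and uc0: "uc \<noteq> 0\<^sub>v n" and eq: "Ac *\<^sub>v uc = z \<cdot>\<^sub>v uc"
    using ev Ac unfolding eigenvector_def by auto
  have Aij: "\<And>i j. i < n \<Longrightarrow> j < n \<Longrightarrow> A $$ (j, i) = A $$ (i, j)"
    using sym A by (metis carrier_matD index_transpose_mat(1))
  have eqi: "\<And>i. i < n \<Longrightarrow> (\<Sum>j<n. of_real (A $$ (i,j)) * uc $ j) = z * uc $ i"
  proof -
    fix i assume i: "i < n"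
    have "(Ac *\<^sub>v uc) $ i = (z \<cdot>\<^sub>v uc) $ i" using eq by simp
    thus "(\<Sum>j<n. of_real (A $$ (i,j)) * uc $ j) = z * uc $ i"
      using i A uc by (simp add: Ac_def mult_mat_vec_def scalar_prod_def atLeast0LessThan)
  qed
  define s where "s = (\<Sum>i<n. cnj (uc $ i) * (\<Sum>j<n. of_real (A $$ (i,j)) * uc $ j))"
  have s1: "s = z * (\<Sum>i<n. cnj (uc $ i) * uc $ i)"
  proof -
    have "s = (\<Sum>i<n. cnj (uc $ i) * (z * uc $ i))"
      unfolding s_def by (intro sum.cong refl, simp add: eqi)
    thus ?thesis by (simp add: sum_distrib_left mult.commute mult.left_commute)
  qed
  have "cnj s = (\<Sum>i<n. (\<Sum>j<n. uc $ i * of_real (A $$ (i,j)) * cnj (uc $ j)))"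
    unfolding s_def by (simp add: sum_distrib_left mult.assoc)
  also have "\<dots> = (\<Sum>j<n. (\<Sum>i<n. uc $ i * of_real (A $$ (i,j)) * cnj (uc $ j)))"
    by (rule sum.swap)
  also have "\<dots> = s"
    unfolding s_def sum_distrib_left
    by (intro sum.cong refl, simp add: Aij mult.commute mult.left_commute)
  finally have sreal: "cnj s = s" .
  define t where "t = (\<Sum>i<n. cnj (uc $ i) * uc $ i)"
  have tr: "t = of_real (\<Sum>i<n. (cmod (uc $ i))^2)"
    unfolding t_def of_real_sum by (intro sum.cong refl) (unfold of_real_power[symmetric] complex_norm_square, simp add: mult.commute)
  have "\<exists>i<n. uc $ i \<noteq> 0"
    using uc uc0 by (metis carrier_vecD eq_vecI index_zero_vec(1) index_zero_vec(2))
  then have tpos: "(\<Sum>i<n. (cmod (uc $ i))^2) > 0"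
  proof -
    obtain i where "i < n" "uc $ i \<noteq> 0" using \<open>\<exists>i<n. uc $ i \<noteq> 0\<close> by auto
    then show ?thesis by (intro sum_pos2[of _ i]) auto
  qed
  have zreal: "cnj z = z"
  proof -
    have "cnj s = cnj z * t" using s1 tr by (simp add: t_def)
    also have "cnj s = z * t" using sreal s1 t_def by simp
    finally have "(z - cnj z) * t = 0" by (simp add: algebra_simps)
    moreover have "t \<noteq> 0" unfolding tr by (simp only: of_real_eq_0_iff) (use tpos in linarith)
    ultimately show ?thesis by simp
  qed
  define ur where "ur = vec n (\<lambda>i. Re (uc $ i))"
  define ui where "ui = vec n (\<lambda>i. Im (uc $ i))"
  have re: "A *\<^sub>v ur = Re z \<cdot>\<^sub>v ur"
  proof (rule eq_vecI)
    fix i assume "i < dim_vec (Re z \<cdot>\<^sub>v ur)"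
    then have i: "i < n" by (simp add: ur_def)
    have "Re (\<Sum>j<n. of_real (A $$ (i,j)) * uc $ j) = Re (z * uc $ i)" using eqi[OF i] by simp
    moreover have "Im z = 0" using zreal by (metis Reals_cnj_iff complex_is_Real_iff)
    ultimately show "(A *\<^sub>v ur) $ i = (Re z \<cdot>\<^sub>v ur) $ i"
      using i A by (simp add: ur_def mult_mat_vec_def scalar_prod_def atLeast0LessThan Re_sum)
  qed (use A in \<open>simp add: ur_def\<close>)
  have im: "A *\<^sub>v ui = Re z \<cdot>\<^sub>v ui"
  proof (rule eq_vecI)
    fix i assume "i < dim_vec (Re z \<cdot>\<^sub>v ui)"
    then have i: "i < n" by (simp add: ui_def)
    have "Im (\<Sum>j<n. of_real (A $$ (i,j)) * uc $ j) = Im (z * uc $ i)" using eqi[OF i] by simp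
    moreover have "Im z = 0" using zreal by (metis Reals_cnj_iff complex_is_Real_iff)
    ultimately show "(A *\<^sub>v ui) $ i = (Re z \<cdot>\<^sub>v ui) $ i"
      using i A by (simp add: ui_def mult_mat_vec_def scalar_prod_def atLeast0LessThan Im_sum)
  qed (use A in \<open>simp add: ui_def\<close>)
  obtain i where i: "i < n" "uc $ i \<noteq> 0" using \<open>\<exists>i<n. uc $ i \<noteq> 0\<close> by auto
  show ?thesis
  proof (cases "Re (uc $ i) = 0")
    case True
    then have "Im (uc $ i) \<noteq> 0" using i complex_eq_iff by auto
    then have "ui \<noteq> 0\<^sub>v n" using i by (metis index_vec index_zero_vec(1) ui_def)
    moreover have "ui \<in> carrier_vec n" by (simp add: ui_def)
    ultimately show ?thesis using im by blast
  next
    case False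
    then have "ur \<noteq> 0\<^sub>v n" using i by (metis index_vec index_zero_vec(1) ur_def)
    moreover have "ur \<in> carrier_vec n" by (simp add: ur_def)
    ultimately show ?thesis using re by blast
  qed
qed




lemma householder:
  fixes u :: "real vec"
  assumes u: "u \<in> carrier_vec n" and uu: "u \<bullet> u = 1" and n: "n > 0"
  shows "\<exists>H. H \<in> carrier_mat n n \<and> transpose_mat H = H \<and> H * H = 1\<^sub>m n \<and> H *\<^sub>v unit_vec n 0 = u"
proof (cases "u = unit_vec n 0")
  case True
  then show ?thesis by (intro exI[of _ "1\<^sub>m n"]) (auto simp: u)
next
  case False
  define w where "w = u - unit_vec n 0"
  have w: "w \<in> carrier_vec n" using u by (simp add: w_def)
  define s where "s = (\<Sum>k<n. w $ k * w $ k)"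
  have s_eq: "s = w \<bullet> w" using w by (simp add: s_def scalar_prod_def atLeast0LessThan)
  have "w \<noteq> 0\<^sub>v n"
  proof
    assume w0: "w = 0\<^sub>v n"
    have "u = unit_vec n 0"
    proof (rule eq_vecI)
      fix i assume "i < dim_vec (unit_vec n 0)"
      then have "w $ i = 0" using w0 by simp
      then show "u $ i = unit_vec n 0 $ i" using u \<open>i < dim_vec (unit_vec n 0)\<close> by (simp add: w_def)
    qed (use u in simp)
    with False show False by simp
  qed
  then obtain k where k: "k < n" "w $ k \<noteq> 0" using w by (metis eq_vecI carrier_vecD index_zero_vec)
  have spos: "s > 0" unfolding s_def
    using k by (intro sum_pos2[of _ k]) (auto simp: zero_less_mult_iff linorder_neq_iff)
  define c where "c = 2 / s"
  define H where "H = mat n n (\<lambda>(i,j). (if i = j then 1 else 0) - c * w $ i * w $ j)"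
  have H: "H \<in> carrier_mat n n" by (simp add: H_def)
  have HT: "transpose_mat H = H" by (rule eq_matI) (auto simp: H_def)
  have HH: "H * H = 1\<^sub>m n"
  proof (rule eq_matI)
    fix i j assume ij: "i < dim_row (1\<^sub>m n)" "j < dim_col (1\<^sub>m n)"
    then have i: "i < n" and j: "j < n" by auto
    have "(H * H) $$ (i,j) = (\<Sum>k<n. ((if i = k then 1 else 0) - c * w $ i * w $ k) *
                                      ((if k = j then 1 else 0) - c * w $ k * w $ j))"
      using i j by (simp add: H_def scalar_prod_def atLeast0LessThan)
    also have "\<dots> = (\<Sum>k<n. (if i = k then (if k = j then 1 else 0) else 0))
        - (\<Sum>k<n. (if i = k then c * w $ k * w $ j else 0))
        - (\<Sum>k<n. (if k = j then c * w $ i * w $ k else 0))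
        + (\<Sum>k<n. c * c * w $ i * w $ j * (w $ k * w $ k))"
    proof -
      have "\<And>k. ((if i = k then 1 else 0) - c * w $ i * w $ k) * ((if k = j then 1 else 0) - c * w $ k * w $ j)
        = (if i = k then (if k = j then 1 else 0) else 0) - (if i = k then c * w $ k * w $ j else 0)
          - (if k = j then c * w $ i * w $ k else 0) + c * c * w $ i * w $ j * (w $ k * w $ k)"
        by (auto simp: algebra_simps)
      then show ?thesis by (simp only: sum.distrib sum_subtractf)
    qed
    also have "\<dots> = (if i = j then 1 else 0) - c * w $ i * w $ j - c * w $ i * w $ j
        + c * c * w $ i * w $ j * s"
      using i j by (simp add: s_def sum_distrib_left)
    also have "c * c * w $ i * w $ j * s = 2 * c * w $ i * w $ j"
      using spos by (simp add: c_def field_simps power2_eq_square)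
    finally show "(H * H) $$ (i,j) = 1\<^sub>m n $$ (i,j)" using i j by simp
  qed (auto simp: H_def)
  have w0: "w $ 0 = u $ 0 - 1" using n u by (simp add: w_def)
  have "s = u \<bullet> u - 2 * u $ 0 + 1"
  proof -
    have "s = (\<Sum>k<n. u $ k * u $ k) - 2 * (\<Sum>k<n. if k = 0 then u $ k else 0) + (\<Sum>k<n. if k = 0 then 1 else 0)"
    proof -
      have "\<And>k. k \<in> {..<n} \<Longrightarrow> w $ k * w $ k = u $ k * u $ k - 2 * (if k = 0 then u $ k else 0) + (if k = 0 then 1 else 0)"
        using u by (auto simp: w_def algebra_simps)
      then have "s = (\<Sum>k<n. u $ k * u $ k - 2 * (if k = 0 then u $ k else 0) + (if k = 0 then 1 else 0))"
        unfolding s_def by (rule sum.cong[OF refl])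
      then show ?thesis by (simp only: sum.distrib sum_subtractf sum_distrib_left)
    qed
    also have "\<dots> = u \<bullet> u - 2 * u $ 0 + 1" using n u by (simp add: scalar_prod_def atLeast0LessThan)
    finally show ?thesis .
  qed
  then have s2: "s = 2 - 2 * u $ 0" using uu by simp
  have cw0: "c * w $ 0 = -1" using spos s2 w0 by (simp add: c_def field_simps)
  have He: "H *\<^sub>v unit_vec n 0 = u"
  proof (rule eq_vecI)
    fix i assume "i < dim_vec u"
    then have i: "i < n" using u by simp
    have "(H *\<^sub>v unit_vec n 0) $ i = (if i = 0 then 1 else 0) - c * w $ i * w $ 0"
      using i n by (simp add: H_def mult_mat_vec_def scalar_prod_def atLeast0LessThan unit_vec_def
           if_distrib cong: if_cong)
    also have "c * w $ i * w $ 0 = (c * w $ 0) * w $ i" by (simp add: algebra_simps)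
    also have "\<dots> = - w $ i" using cw0 by simp
    also have "(if i = 0 then 1 else 0) - - w $ i = u $ i" using i u by (simp add: w_def)
    finally show "(H *\<^sub>v unit_vec n 0) $ i = u $ i" .
  qed (use u in \<open>simp add: H_def\<close>)
  show ?thesis using H HT HH He by blast
qed




lemma vec_sq_pos:
  fixes u :: "real vec"
  assumes u: "u \<in> carrier_vec n" and u0: "u \<noteq> 0\<^sub>v n"
  shows "u \<bullet> u > 0"
proof -
  obtain k where k: "k < n" "u $ k \<noteq> 0" using u u0 by (metis eq_vecI carrier_vecD index_zero_vec)
  have "u \<bullet> u = (\<Sum>i<n. u $ i * u $ i)" using u by (simp add: scalar_prod_def atLeast0LessThan)
  also have "\<dots> > 0" using k by (intro sum_pos2[of _ k]) (auto simp: zero_less_mult_iff linorder_neq_iff)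
  finally show ?thesis .
qed

lemma spectral:
  fixes A :: "real mat"
  assumes "A \<in> carrier_mat n n" and "transpose_mat A = A"
  shows "\<exists>P d. P \<in> carrier_mat n n \<and> transpose_mat P * P = 1\<^sub>m n \<and> P * transpose_mat P = 1\<^sub>m n
     \<and> transpose_mat P * A * P = mat_diag n d"
  using assms
proof (induction n arbitrary: A)
  case 0
  then show ?case by (intro exI[of _ "1\<^sub>m 0"] exI[of _ "\<lambda>_. 0"]) (auto intro!: eq_matI simp: mat_diag_def)
next
  case (Suc m)
  note A = Suc.prems(1) and sym = Suc.prems(2)
  obtain u0 lam where u0: "u0 \<in> carrier_vec (Suc m)" "u0 \<noteq> 0\<^sub>v (Suc m)" "A *\<^sub>v u0 = lam \<cdot>\<^sub>v u0"
    using real_sym_eigvec[OF A sym] by auto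
  define u where "u = (1 / sqrt (u0 \<bullet> u0)) \<cdot>\<^sub>v u0"
  have pos: "u0 \<bullet> u0 > 0" using vec_sq_pos u0 by blast
  have u: "u \<in> carrier_vec (Suc m)" using u0 by (simp add: u_def)
  have uu: "u \<bullet> u = 1" using u0 pos
    by (simp add: u_def smult_scalar_prod_distrib scalar_prod_smult_distrib[of _ "Suc m"] real_sqrt_mult[symmetric])
  have Au: "A *\<^sub>v u = lam \<cdot>\<^sub>v u" using u0 A
    by (simp add: u_def mult_mat_vec smult_smult_assoc mult.commute)
  obtain H where H: "H \<in> carrier_mat (Suc m) (Suc m)" and HT: "transpose_mat H = H"
    and HH: "H * H = 1\<^sub>m (Suc m)" and He: "H *\<^sub>v unit_vec (Suc m) 0 = u"
    using householder[OF u uu] by auto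
  define A' where "A' = H * A * H"
  have A': "A' \<in> carrier_mat (Suc m) (Suc m)" using H A by (simp add: A'_def)
  have A'T: "transpose_mat A' = A'"
  proof -
    have "transpose_mat (H * A * H) = transpose_mat H * transpose_mat (H * A)"
      by (rule transpose_mult) (use H A in auto)
    also have "transpose_mat (H * A) = transpose_mat A * transpose_mat H"
      by (rule transpose_mult) (use H A in auto)
    finally show ?thesis using H A HT sym
      by (simp add: A'_def assoc_mult_mat[of _ "Suc m" "Suc m" _ "Suc m" _ "Suc m"])
  qed
  have Hu: "H *\<^sub>v u = unit_vec (Suc m) 0"
    using He H HH by (metis assoc_mult_mat_vec one_mult_mat_vec unit_vec_carrier zero_less_Suc)
  have A'e: "A' *\<^sub>v unit_vec (Suc m) 0 = lam \<cdot>\<^sub>v unit_vec (Suc m) 0"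
  proof -
    have "A' *\<^sub>v unit_vec (Suc m) 0 = H *\<^sub>v (A *\<^sub>v (H *\<^sub>v unit_vec (Suc m) 0))"
      using H A by (simp add: A'_def assoc_mult_mat_vec[of _ "Suc m" "Suc m" _ "Suc m"])
    also have "\<dots> = lam \<cdot>\<^sub>v unit_vec (Suc m) 0" using He Au Hu H u by (simp add: mult_mat_vec)
    finally show ?thesis .
  qed
  have col0: "\<And>i. i < Suc m \<Longrightarrow> A' $$ (i, 0) = (if i = 0 then lam else 0)"
  proof -
    fix i assume i: "i < Suc m"
    have "(A' *\<^sub>v unit_vec (Suc m) 0) $ i = A' $$ (i, 0)"
      using i A' by (simp add: row_def)
    then show "A' $$ (i, 0) = (if i = 0 then lam else 0)" using A'e i by (cases "i = 0") auto
  qed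
  have row0: "\<And>j. j < Suc m \<Longrightarrow> A' $$ (0, j) = (if j = 0 then lam else 0)"
    using col0 A'T A' by (metis carrier_matD index_transpose_mat(1) zero_less_Suc)
  define A3 where "A3 = mat m m (\<lambda>(i,j). A' $$ (Suc i, Suc j))"
  have A3: "A3 \<in> carrier_mat m m" by (simp add: A3_def)
  have A3T: "transpose_mat A3 = A3"
    using A'T A' by (intro eq_matI) (auto simp: A3_def, metis Suc_less_eq carrier_matD index_transpose_mat(1))
  obtain P3 d3 where P3: "P3 \<in> carrier_mat m m" "transpose_mat P3 * P3 = 1\<^sub>m m"
    "P3 * transpose_mat P3 = 1\<^sub>m m" "transpose_mat P3 * A3 * P3 = mat_diag m d3"
    using Suc.IH[OF A3 A3T] by auto
  define L where "L = mat 1 1 (\<lambda>_. lam)"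
  have A'blk: "A' = four_block_mat L (0\<^sub>m 1 m) (0\<^sub>m m 1) A3"
    using A' col0 row0 by (intro eq_matI) (auto simp: L_def A3_def)
  define Pe where "Pe = four_block_mat (1\<^sub>m 1) (0\<^sub>m 1 m) (0\<^sub>m m 1) P3"
  have Pe: "Pe \<in> carrier_mat (Suc m) (Suc m)"
    unfolding Pe_def using four_block_carrier_mat[OF one_carrier_mat[of 1] P3(1)] by simp
  have PeT: "transpose_mat Pe = four_block_mat (1\<^sub>m 1) (0\<^sub>m 1 m) (0\<^sub>m m 1) (transpose_mat P3)"
    unfolding Pe_def using P3 by (subst transpose_four_block_mat[of _ 1 1 _ m _ m], auto)
  have PeTPe: "transpose_mat Pe * Pe = 1\<^sub>m (Suc m)"
  proof -
    have "transpose_mat Pe * Pe = four_block_mat (1\<^sub>m 1) (0\<^sub>m 1 m) (0\<^sub>m m 1) (transpose_mat P3)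
       * four_block_mat (1\<^sub>m 1) (0\<^sub>m 1 m) (0\<^sub>m m 1) P3" by (simp only: PeT) (simp add: Pe_def)
    also have "\<dots> = four_block_mat (1\<^sub>m 1) (0\<^sub>m 1 m) (0\<^sub>m m 1) (1\<^sub>m m)"
      using P3 by (subst mult_four_block_mat[of _ 1 1 _ m _ m _ _ 1 _ m], auto)
    also have "\<dots> = 1\<^sub>m (Suc m)" using four_block_one_mat[of 1 m] by simp
    finally show ?thesis .
  qed
  have PePeT: "Pe * transpose_mat Pe = 1\<^sub>m (Suc m)"
  proof -
    have "Pe * transpose_mat Pe = four_block_mat (1\<^sub>m 1) (0\<^sub>m 1 m) (0\<^sub>m m 1) P3
       * four_block_mat (1\<^sub>m 1) (0\<^sub>m 1 m) (0\<^sub>m m 1) (transpose_mat P3)" by (simp only: PeT) (simp add: Pe_def)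
    also have "\<dots> = four_block_mat (1\<^sub>m 1) (0\<^sub>m 1 m) (0\<^sub>m m 1) (1\<^sub>m m)"
      using P3 by (subst mult_four_block_mat[of _ 1 1 _ m _ m _ _ 1 _ m], auto)
    also have "\<dots> = 1\<^sub>m (Suc m)" using four_block_one_mat[of 1 m] by simp
    finally show ?thesis .
  qed
  have PeA'Pe: "transpose_mat Pe * A' * Pe = four_block_mat L (0\<^sub>m 1 m) (0\<^sub>m m 1) (mat_diag m d3)"
  proof -
    have "transpose_mat Pe * A' = four_block_mat L (0\<^sub>m 1 m) (0\<^sub>m m 1) (transpose_mat P3 * A3)"
      unfolding PeT A'blk using P3 A3
      by (subst mult_four_block_mat[of _ 1 1 _ m _ m _ _ 1 _ m], auto simp: L_def)
    also have "\<dots> * Pe = four_block_mat L (0\<^sub>m 1 m) (0\<^sub>m m 1) (transpose_mat P3 * A3 * P3)"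
      unfolding Pe_def using P3 A3
      by (subst mult_four_block_mat[of _ 1 1 _ m _ m _ _ 1 _ m], auto simp: L_def)
    finally show ?thesis using P3 by simp
  qed
  define P where "P = H * Pe"
  define d where "d = (\<lambda>i. if i = 0 then lam else d3 (i - 1))"
  have P: "P \<in> carrier_mat (Suc m) (Suc m)" using H Pe by (simp add: P_def)
  have PT: "transpose_mat P = transpose_mat Pe * H"
    using H Pe by (simp add: P_def transpose_mult[of _ "Suc m" "Suc m"] HT)
  have "transpose_mat P * P = transpose_mat Pe * (H * H) * Pe"
    using H Pe by (simp only: PT) (simp add: P_def assoc_mult_mat[of _ "Suc m" "Suc m" _ "Suc m" _ "Suc m"])
  then have 1: "transpose_mat P * P = 1\<^sub>m (Suc m)" using HH PeTPe Pe by simp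
  have "P * transpose_mat P = H * (Pe * transpose_mat Pe) * H"
    using H Pe by (simp only: PT) (simp add: P_def assoc_mult_mat[of _ "Suc m" "Suc m" _ "Suc m" _ "Suc m"])
  then have 2: "P * transpose_mat P = 1\<^sub>m (Suc m)" using HH PePeT H by simp
  have "transpose_mat P * A * P = transpose_mat Pe * A' * Pe"
    using H Pe A by (simp only: PT) (simp add: P_def A'_def assoc_mult_mat[of _ "Suc m" "Suc m" _ "Suc m" _ "Suc m"])
  also have "\<dots> = mat_diag (Suc m) d"
    unfolding PeA'Pe by (intro eq_matI) (auto simp: L_def d_def mat_diag_def)
  finally show ?case using P 1 2 by blast
qed




lemma order_prod_linear:
  "Polynomial.order k (\<Prod>a\<leftarrow>as. [:- a, 1:]) = length (filter (\<lambda>a. a = k) as)"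
proof (induction as)
  case Nil
  then show ?case by (simp add: order_0I)
next
  case (Cons a as)
  have ne: "(\<Prod>a\<leftarrow>as. [:- a, 1:]) \<noteq> (0 :: 'a poly)"
  proof -
    have "\<And>a. [:- a, 1:] \<noteq> (0 :: 'a poly)" by simp
    then show ?thesis by (auto simp: prod_list_zero_iff)
  qed
  have eq: "(\<Prod>a\<leftarrow>a # as. [:- a, 1:]) = [:- a, 1:] * (\<Prod>a\<leftarrow>as. [:- a, 1:])" by simp
  have "Polynomial.order k ([:- a, 1:] * (\<Prod>a\<leftarrow>as. [:- a, 1:])) =
        Polynomial.order k [:- a, 1:] + Polynomial.order k (\<Prod>a\<leftarrow>as. [:- a, 1:])"
  proof (rule order_mult)
    have "[:- a, 1:] \<noteq> (0 :: 'a poly)" by simp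
    then show "[:- a, 1:] * (\<Prod>a\<leftarrow>as. [:- a, 1:]) \<noteq> 0" using ne by (simp only: mult_eq_0_iff) blast
  qed
  then have "Polynomial.order k (\<Prod>a\<leftarrow>a # as. [:- a, 1:]) =
        Polynomial.order k [:- a, 1:] + Polynomial.order k (\<Prod>a\<leftarrow>as. [:- a, 1:])"
    by (simp only: eq)
  moreover have "Polynomial.order k [:- a, 1:] = (if a = k then 1 else 0)"
  proof (cases "a = k")
    case True
    then show ?thesis using order_power_n_n[of k 1] by simp
  next
    case False
    then have "poly [:- a, 1:] k \<noteq> 0" by simp
    then show ?thesis using False order_root[of "[:- a, 1:]" k] by auto
  qed
  ultimately show ?case using Cons by simp
qed

lemma sum_delta_mult:
  fixes f g :: "nat \<Rightarrow> 'a::comm_semiring_1"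
  assumes "i < n"
  shows "(\<Sum>j<n. (if i = j then f j else 0) * g j) = f i * g i"
proof -
  have "(\<Sum>j<n. (if i = j then f j else 0) * g j) = (\<Sum>j<n. if i = j then f j * g j else 0)"
    by (intro sum.cong) auto
  also have "\<dots> = f i * g i" using assms by (simp add: sum.delta)
  finally show ?thesis .
qed

locale symdiag =
  fixes A :: "real mat" and n :: nat and P :: "real mat" and d :: "nat \<Rightarrow> real"
  assumes A: "A \<in> carrier_mat n n" and P: "P \<in> carrier_mat n n"
    and PTP: "transpose_mat P * P = 1\<^sub>m n" and PPT: "P * transpose_mat P = 1\<^sub>m n"
    and diag: "transpose_mat P * A * P = mat_diag n d"
begin

lemma PT: "transpose_mat P \<in> carrier_mat n n" using P by simp

lemma A_eq: "A = P * mat_diag n d * transpose_mat P"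
proof -
  have "P * mat_diag n d * transpose_mat P = (P * transpose_mat P) * A * (P * transpose_mat P)"
    unfolding diag[symmetric] using A P PT by (simp add: assoc_mult_mat[of _ n n _ n _ n])
  then show ?thesis using PPT A by simp
qed

lemma charpoly: "char_poly A = (\<Prod>a\<leftarrow>map d [0..<n]. [:- a, 1:])"
proof -
  have "similar_mat A (mat_diag n d)"
    unfolding similar_mat_def similar_mat_wit_def
    by (intro exI[of _ P] exI[of _ "transpose_mat P"]) (use A P PT PPT PTP A_eq in \<open>auto simp: Let_def\<close>)
  then have "char_poly A = char_poly (mat_diag n d)" by (rule char_poly_similar)
  also have "\<dots> = (\<Prod>a\<leftarrow>diag_mat (mat_diag n d). [:- a, 1:])"
    by (rule char_poly_upper_triangular[of _ n]) (auto simp: upper_triangular_def mat_diag_def)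
  also have "diag_mat (mat_diag n d) = map d [0..<n]"
    by (simp add: diag_mat_def mat_diag_def)
  finally show ?thesis .
qed

lemma eigenvalue_iff: "eigenvalue A k \<longleftrightarrow> (\<exists>i<n. d i = k)"
  unfolding eigenvalue_root_char_poly[OF A] charpoly
  by (auto simp: poly_prod_list prod_list_zero_iff)

lemma order_eq: "Polynomial.order k (char_poly A) = card {i. i < n \<and> d i = k}"
proof -
  have "Polynomial.order k (char_poly A) = length (filter (\<lambda>a. a = k) (map d [0..<n]))"
    unfolding charpoly by (rule order_prod_linear)
  also have "\<dots> = length (filter (\<lambda>i. d i = k) [0..<n])" by (simp add: filter_map o_def)
  also have "\<dots> = card {i. i < n \<and> d i = k}"
    by (subst distinct_length_filter) (auto intro: arg_cong[where f=card])
  finally show ?thesis .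
qed

lemma eig_set: "{k. eigenvalue A k} = d ` {..<n}"
  using eigenvalue_iff by auto

lemma lmax: assumes n: "n > 0"
  shows "lambda_max A = Max (d ` {..<n})" "\<exists>i<n. d i = lambda_max A" "\<And>i. i < n \<Longrightarrow> d i \<le> lambda_max A"
proof -
  show lm: "lambda_max A = Max (d ` {..<n})" unfolding lambda_max_def eig_set ..
  have "Max (d ` {..<n}) \<in> d ` {..<n}" using n by (intro Max_in) auto
  then show "\<exists>i<n. d i = lambda_max A" unfolding lm by auto
  show "\<And>i. i < n \<Longrightarrow> d i \<le> lambda_max A" unfolding lm by (intro Max_ge) auto
qed

lemma quad: assumes x: "x \<in> carrier_vec n"
  shows "x \<bullet> (A *\<^sub>v x) = (\<Sum>i<n. d i * ((transpose_mat P *\<^sub>v x) $ i)^2)"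
    and "x \<bullet> x = (\<Sum>i<n. ((transpose_mat P *\<^sub>v x) $ i)^2)"
proof -
  define y where "y = transpose_mat P *\<^sub>v x"
  have y: "y \<in> carrier_vec n" using x PT by (simp add: y_def)
  have "A *\<^sub>v x = P *\<^sub>v (mat_diag n d *\<^sub>v y)"
    unfolding y_def by (subst A_eq) (use P PT x in \<open>simp add: assoc_mult_mat_vec[of _ n n _ n]\<close>)
  moreover have Dy: "mat_diag n d *\<^sub>v y \<in> carrier_vec n" using mult_mat_vec_carrier[OF mat_diag_dim y] .
  ultimately have "x \<bullet> (A *\<^sub>v x) = y \<bullet> (mat_diag n d *\<^sub>v y)"
    using transpose_vec_mult_scalar[OF P Dy x] unfolding y_def by simp
  also have "\<dots> = (\<Sum>i<n. y $ i * (\<Sum>j<n. (if i = j then d j else 0) * y $ j))"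
    using y by (simp add: scalar_prod_def mult_mat_vec_def mat_diag_def atLeast0LessThan row_def)
  also have "\<dots> = (\<Sum>i<n. d i * (y $ i)^2)"
    by (intro sum.cong refl) (simp add: sum_delta_mult power2_eq_square)
  finally show "x \<bullet> (A *\<^sub>v x) = (\<Sum>i<n. d i * ((transpose_mat P *\<^sub>v x) $ i)^2)" unfolding y_def .
  have "x = P *\<^sub>v y" unfolding y_def using P PT x PPT by (simp add: assoc_mult_mat_vec[symmetric, of _ n n _ n])
  then have "x \<bullet> x = y \<bullet> y"
    using transpose_vec_mult_scalar[OF P y x] unfolding y_def by simp
  also have "\<dots> = (\<Sum>i<n. (y $ i)^2)" using y by (simp add: scalar_prod_def atLeast0LessThan power2_eq_square)
  finally show "x \<bullet> x = (\<Sum>i<n. ((transpose_mat P *\<^sub>v x) $ i)^2)" unfolding y_def .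
qed

lemma rayleigh: assumes n: "n > 0" and x: "x \<in> carrier_vec n"
  shows "x \<bullet> (A *\<^sub>v x) \<le> lambda_max A * (x \<bullet> x)"
proof -
  have "x \<bullet> (A *\<^sub>v x) = (\<Sum>i<n. d i * ((transpose_mat P *\<^sub>v x) $ i)^2)" using quad[OF x] by simp
  also have "\<dots> \<le> (\<Sum>i<n. lambda_max A * ((transpose_mat P *\<^sub>v x) $ i)^2)"
    by (intro sum_mono mult_right_mono lmax(3)[OF n]) auto
  also have "\<dots> = lambda_max A * (x \<bullet> x)" using quad(2)[OF x] by (simp add: sum_distrib_left)
  finally show ?thesis .
qed

lemma gap:
  assumes n: "n > 0" and simple: "Polynomial.order (lambda_max A) (char_poly A) = 1"
    and u: "u \<in> carrier_vec n" "u \<noteq> 0\<^sub>v n" and Au: "A *\<^sub>v u = lambda_max A \<cdot>\<^sub>v u"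
  shows "\<exists>\<delta>>0. \<forall>x\<in>carrier_vec n.
           x \<bullet> (A *\<^sub>v x) \<le> lambda_max A * (x \<bullet> x) - \<delta> * (x \<bullet> x - (x \<bullet> u)^2 / (u \<bullet> u))"
proof -
  let ?l = "lambda_max A"
  have "card {i. i < n \<and> d i = ?l} = 1" using simple order_eq by simp
  then obtain i0 where i0set: "{i. i < n \<and> d i = ?l} = {i0}" by (meson card_1_singletonE)
  then have i0: "i0 < n" "d i0 = ?l" by auto
  have other: "\<And>i. i < n \<Longrightarrow> i \<noteq> i0 \<Longrightarrow> d i < ?l"
    using i0set lmax(3)[OF n] by (metis (mono_tags, lifting) mem_Collect_eq order_less_le singletonD)
  define S where "S = {i. i < n \<and> i \<noteq> i0}"
  define \<delta> where "\<delta> = Min (insert 1 ((\<lambda>i. ?l - d i) ` S))"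
  have fin: "finite S" by (simp add: S_def)
  have dpos: "\<delta> > 0" unfolding \<delta>_def using fin other by (subst Min_gr_iff) (auto simp: S_def)
  have dle: "\<And>i. i \<in> S \<Longrightarrow> \<delta> \<le> ?l - d i" unfolding \<delta>_def using fin by (intro Min_le) auto
  define z where "z = transpose_mat P *\<^sub>v u"
  have z: "z \<in> carrier_vec n" using u PT by (simp add: z_def)
  have Dz: "mat_diag n d *\<^sub>v z = ?l \<cdot>\<^sub>v z"
  proof -
    have "mat_diag n d *\<^sub>v z = transpose_mat P *\<^sub>v (A *\<^sub>v ((P * transpose_mat P) *\<^sub>v u))"
      unfolding diag[symmetric] z_def using A P PT u by (simp add: assoc_mult_mat_vec[of _ n n _ n])
    also have "\<dots> = ?l \<cdot>\<^sub>v z" using PPT u Au PT by (simp add: z_def mult_mat_vec)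
    finally show ?thesis .
  qed
  have zi: "\<And>i. i < n \<Longrightarrow> i \<noteq> i0 \<Longrightarrow> z $ i = 0"
  proof -
    fix i assume i: "i < n" "i \<noteq> i0"
    have "(mat_diag n d *\<^sub>v z) $ i = d i * z $ i"
      using i z by (simp add: mult_mat_vec_def mat_diag_def scalar_prod_def row_def atLeast0LessThan sum_delta_mult)
    moreover have "(mat_diag n d *\<^sub>v z) $ i = ?l * z $ i" using Dz i z by simp
    ultimately have "d i * z $ i = ?l * z $ i" by linarith
    then have "(d i - ?l) * z $ i = 0" by (simp only: left_diff_distrib)
    moreover have "d i - ?l \<noteq> 0" using other[OF i] by simp
    ultimately show "z $ i = 0" by simp
  qed
  have uu: "u \<bullet> u = (z $ i0)^2"
  proof -
    have "u \<bullet> u = (\<Sum>i<n. (z $ i)^2)" using quad(2)[OF u(1)] by (simp add: z_def)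
    also have "\<dots> = (\<Sum>i<n. if i = i0 then (z $ i0)^2 else 0)" by (intro sum.cong) (auto simp: zi)
    finally show ?thesis using i0 by simp
  qed
  have upos: "u \<bullet> u > 0" using vec_sq_pos u by blast
  show ?thesis
  proof (intro exI[of _ \<delta>] conjI ballI dpos)
    fix x :: "real vec" assume x: "x \<in> carrier_vec n"
    define y where "y = transpose_mat P *\<^sub>v x"
    have y: "y \<in> carrier_vec n" using x PT by (simp add: y_def)
    have xu: "x \<bullet> u = y $ i0 * z $ i0"
    proof -
      have "u = P *\<^sub>v z" unfolding z_def using P PT u PPT by (simp add: assoc_mult_mat_vec[symmetric, of _ n n _ n])
      then have "x \<bullet> u = y \<bullet> z"
        using transpose_vec_mult_scalar[OF P z x] unfolding y_def by simp
      also have "\<dots> = (\<Sum>i<n. y $ i * z $ i)" using z by (simp add: scalar_prod_def atLeast0LessThan)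
      also have "\<dots> = (\<Sum>i<n. if i = i0 then y $ i0 * z $ i0 else 0)"
        by (intro sum.cong) (auto simp: zi)
      finally show ?thesis using i0 by simp
    qed
    have t: "(x \<bullet> u)^2 / (u \<bullet> u) = (y $ i0)^2"
      using uu upos xu by (simp add: power_mult_distrib)
    have xx: "x \<bullet> x = (\<Sum>i<n. (y $ i)^2)" using quad(2)[OF x] by (simp add: y_def)
    have split: "\<And>f :: nat \<Rightarrow> real. (\<Sum>i<n. f i) = f i0 + (\<Sum>i\<in>S. f i)"
    proof -
      fix f :: "nat \<Rightarrow> real"
      have e: "{..<n} = insert i0 S" using i0 by (auto simp: S_def)
      have nS: "i0 \<notin> S" by (simp add: S_def)
      show "(\<Sum>i<n. f i) = f i0 + (\<Sum>i\<in>S. f i)" unfolding e by (rule sum.insert[OF fin nS])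
    qed
    define R where "R = (\<Sum>i\<in>S. (y $ i)^2)"
    have q: "x \<bullet> (A *\<^sub>v x) = (\<Sum>i<n. d i * (y $ i)^2)" using quad(1)[OF x] by (simp add: y_def)
    have s1: "(\<Sum>i<n. d i * (y $ i)^2) = d i0 * (y $ i0)^2 + (\<Sum>i\<in>S. d i * (y $ i)^2)" by (rule split)
    have s2: "(\<Sum>i<n. (y $ i)^2) = (y $ i0)^2 + R" unfolding R_def by (rule split)
    have le: "(\<Sum>i\<in>S. d i * (y $ i)^2) \<le> (\<Sum>i\<in>S. (?l - \<delta>) * (y $ i)^2)"
    proof (intro sum_mono mult_right_mono)
      fix i assume "i \<in> S" then show "d i \<le> ?l - \<delta>" using dle[of i] by linarith
    qed simp
    have eq: "(\<Sum>i\<in>S. (?l - \<delta>) * (y $ i)^2) = (?l - \<delta>) * R" by (simp add: R_def sum_distrib_left)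
    have d0: "d i0 * (y $ i0)^2 = ?l * (y $ i0)^2" using i0 by simp
    have alg: "?l * ((y $ i0)^2 + R) - \<delta> * ((y $ i0)^2 + R - (y $ i0)^2) = ?l * (y $ i0)^2 + (?l - \<delta>) * R"
      by (simp add: algebra_simps)
    show "x \<bullet> (A *\<^sub>v x) \<le> ?l * (x \<bullet> x) - \<delta> * (x \<bullet> x - (x \<bullet> u)^2 / (u \<bullet> u))"
      unfolding t xx s2 alg using q s1 le eq d0 by linarith
  qed
qed

end




lemma spectral_symdiag:
  assumes "A \<in> carrier_mat n n" "transpose_mat A = A"
  shows "\<exists>P d. symdiag A n P d"
  using spectral[OF assms] assms(1) unfolding symdiag_def by blast

lemma rayleigh_sym:
  assumes A: "A \<in> carrier_mat n n" "transpose_mat A = A" and n: "n > 0" and x: "x \<in> carrier_vec n"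
  shows "x \<bullet> (A *\<^sub>v x) \<le> lambda_max A * (x \<bullet> x)"
  using spectral_symdiag[OF A] symdiag.rayleigh[OF _ n x] by blast

lemma lmax_eigvec:
  assumes A: "A \<in> carrier_mat n n" "transpose_mat A = A" and n: "n > 0"
  shows "\<exists>z. z \<in> carrier_vec n \<and> z \<noteq> 0\<^sub>v n \<and> A *\<^sub>v z = lambda_max A \<cdot>\<^sub>v z"
proof -
  obtain P d where sd: "symdiag A n P d" using spectral_symdiag[OF A] by blast
  have "eigenvalue A (lambda_max A)" using symdiag.lmax(2)[OF sd n] symdiag.eigenvalue_iff[OF sd] by blast
  then show ?thesis using A(1) unfolding eigenvalue_def eigenvector_def by auto
qed

lemma gap_sym:
  assumes A: "A \<in> carrier_mat n n" "transpose_mat A = A" and n: "n > 0"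
    and simple: "Polynomial.order (lambda_max A) (char_poly A) = 1"
    and u: "u \<in> carrier_vec n" "u \<noteq> 0\<^sub>v n" and Au: "A *\<^sub>v u = lambda_max A \<cdot>\<^sub>v u"
  shows "\<exists>\<delta>>0. \<forall>x\<in>carrier_vec n.
           x \<bullet> (A *\<^sub>v x) \<le> lambda_max A * (x \<bullet> x) - \<delta> * (x \<bullet> x - (x \<bullet> u)^2 / (u \<bullet> u))"
  using spectral_symdiag[OF A] symdiag.gap[OF _ n simple u Au] by blast

lemma lmax_le_iff:
  assumes A: "A \<in> carrier_mat n n" "transpose_mat A = A" and n: "n > 0"
  shows "lambda_max A \<le> l \<longleftrightarrow> (\<forall>z\<in>carrier_vec n. z \<bullet> (A *\<^sub>v z) \<le> l * (z \<bullet> z))"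
proof
  assume le: "lambda_max A \<le> l"
  show "\<forall>z\<in>carrier_vec n. z \<bullet> (A *\<^sub>v z) \<le> l * (z \<bullet> z)"
  proof
    fix z :: "real vec" assume z: "z \<in> carrier_vec n"
    have "z \<bullet> z \<ge> 0" using z by (simp add: scalar_prod_def sum_nonneg)
    then have "lambda_max A * (z \<bullet> z) \<le> l * (z \<bullet> z)" using le by (simp add: mult_right_mono)
    then show "z \<bullet> (A *\<^sub>v z) \<le> l * (z \<bullet> z)" using rayleigh_sym[OF A n z] by linarith
  qed
next
  assume all: "\<forall>z\<in>carrier_vec n. z \<bullet> (A *\<^sub>v z) \<le> l * (z \<bullet> z)"
  obtain z where z: "z \<in> carrier_vec n" "z \<noteq> 0\<^sub>v n" "A *\<^sub>v z = lambda_max A \<cdot>\<^sub>v z"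
    using lmax_eigvec[OF A n] by blast
  have pos: "z \<bullet> z > 0" using vec_sq_pos z by blast
  have "z \<bullet> (A *\<^sub>v z) = lambda_max A * (z \<bullet> z)" using z by simp
  then have "lambda_max A * (z \<bullet> z) \<le> l * (z \<bullet> z)" using all z by auto
  then show "lambda_max A \<le> l" using pos by simp
qed

lemma sum_split_double:
  fixes f :: "nat \<Rightarrow> real"
  shows "(\<Sum>i<N+N. f i) = (\<Sum>i<N. f i) + (\<Sum>i<N. f (i + N))"
proof -
  have e: "{..<N+N} = {..<N} \<union> (\<lambda>i. i + N) ` {..<N}"
  proof (intro equalityI subsetI)
    fix x assume x: "x \<in> {..<N+N}"
    show "x \<in> {..<N} \<union> (\<lambda>i. i + N) ` {..<N}"
    proof (cases "x < N")
      case False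
      then have "x = (x - N) + N" "x - N < N" using x by auto
      then show ?thesis by blast
    qed simp
  qed auto
  have "(\<Sum>i<N+N. f i) = (\<Sum>i<N. f i) + (\<Sum>i\<in>(\<lambda>i. i + N) ` {..<N}. f i)"
    unfolding e by (rule sum.union_disjoint) auto
  also have "(\<Sum>i\<in>(\<lambda>i. i + N) ` {..<N}. f i) = (\<Sum>i<N. f (i + N))"
    by (subst sum.reindex) (auto simp: inj_on_def)
  finally show ?thesis .
qed

lemma mat_diag_mult_vec:
  fixes x :: "real vec"
  assumes "x \<in> carrier_vec n" "i < n"
  shows "(mat_diag n f *\<^sub>v x) $ i = f i * x $ i"
  using assms by (simp add: mult_mat_vec_def mat_diag_def scalar_prod_def row_def atLeast0LessThan sum_delta_mult)

locale mplex =
  fixes N :: nat and L1 L2 :: "real mat"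
  assumes N: "N > 0" and L1: "L1 \<in> carrier_mat N N" and L2: "L2 \<in> carrier_mat N N"
    and L1T: "transpose_mat L1 = L1" and L2T: "transpose_mat L2 = L2"
begin

abbreviation M where "M w \<equiv> multiplex_laplacian N L1 L2 w"

lemma M_carrier: "M w \<in> carrier_mat (N+N) (N+N)"
  unfolding multiplex_laplacian_def Let_def using L1 L2 by simp

lemma M_sym: "transpose_mat (M w) = M w"
proof -
  define W where "W = mat_diag N w"
  have W: "W \<in> carrier_mat N N" by (simp add: W_def)
  have WT: "transpose_mat W = W" by (rule eq_matI) (auto simp: W_def mat_diag_def)
  have "transpose_mat (M w) = four_block_mat (transpose_mat (L1 + W)) (transpose_mat (- W))
          (transpose_mat (- W)) (transpose_mat (L2 + W))"
    unfolding multiplex_laplacian_def Let_def W_def[symmetric]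
    by (rule transpose_four_block_mat) (use L1 L2 W in auto)
  also have "\<dots> = M w"
    unfolding multiplex_laplacian_def Let_def W_def[symmetric]
    using L1 L2 W by (simp add: transpose_add[of _ N N] transpose_uminus WT L1T L2T)
  finally show ?thesis .
qed

definition fst_half :: "real vec \<Rightarrow> real vec" where "fst_half z = vec N (\<lambda>i. z $ i)"
definition snd_half :: "real vec \<Rightarrow> real vec" where "snd_half z = vec N (\<lambda>i. z $ (i + N))"

lemma halves: "fst_half z \<in> carrier_vec N" "snd_half z \<in> carrier_vec N"
  by (auto simp: fst_half_def snd_half_def)

lemma halves_append: assumes z: "z \<in> carrier_vec (N+N)" shows "z = fst_half z @\<^sub>v snd_half z"
  by (rule eq_vecI) (use z in \<open>auto simp: fst_half_def snd_half_def\<close>)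

lemma M_apply_fst:
  assumes z: "z \<in> carrier_vec (N+N)" and i: "i < N"
  shows "(M w *\<^sub>v z) $ i = (L1 *\<^sub>v fst_half z) $ i + w i * (z $ i - z $ (i + N))"
proof -
  define W where "W = mat_diag N w"
  have W: "W \<in> carrier_mat N N" by (simp add: W_def)
  note h = halves[of z]
  have "M w *\<^sub>v z = four_block_mat (L1 + W) (- W) (- W) (L2 + W) *\<^sub>v (fst_half z @\<^sub>v snd_half z)"
    unfolding multiplex_laplacian_def Let_def W_def using halves_append[OF z] by simp
  also have "\<dots> = ((L1 + W) *\<^sub>v fst_half z + (- W) *\<^sub>v snd_half z) @\<^sub>v
                   ((- W) *\<^sub>v fst_half z + (L2 + W) *\<^sub>v snd_half z)"
    by (rule four_block_mat_mult_vec) (use L1 L2 W h in auto)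
  finally have e: "M w *\<^sub>v z = ((L1 + W) *\<^sub>v fst_half z + (- W) *\<^sub>v snd_half z) @\<^sub>v
                   ((- W) *\<^sub>v fst_half z + (L2 + W) *\<^sub>v snd_half z)" .
  have c1: "(L1 + W) *\<^sub>v fst_half z = L1 *\<^sub>v fst_half z + W *\<^sub>v fst_half z"
    by (rule add_mult_distrib_mat_vec[OF L1 W h(1)])
  have c2: "(- W) *\<^sub>v snd_half z = - (W *\<^sub>v snd_half z)"
    by (rule uminus_mult_mat_vec) (use W h in simp)
  have d1: "dim_vec ((L1 + W) *\<^sub>v fst_half z + (- W) *\<^sub>v snd_half z) = N" using L1 W h by simp
  have "(M w *\<^sub>v z) $ i = ((L1 + W) *\<^sub>v fst_half z + (- W) *\<^sub>v snd_half z) $ i"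
    unfolding e using i d1 by (subst index_append_vec(1)) (auto simp: d1)
  also have "\<dots> = (L1 *\<^sub>v fst_half z) $ i + (W *\<^sub>v fst_half z) $ i - (W *\<^sub>v snd_half z) $ i"
    unfolding c1 c2 using i L1 W h by simp
  also have "\<dots> = (L1 *\<^sub>v fst_half z) $ i + w i * (z $ i - z $ (i + N))"
    using i h by (simp add: W_def mat_diag_mult_vec fst_half_def snd_half_def algebra_simps)
  finally show ?thesis .
qed

lemma M_apply_snd:
  assumes z: "z \<in> carrier_vec (N+N)" and i: "i < N"
  shows "(M w *\<^sub>v z) $ (i + N) = (L2 *\<^sub>v snd_half z) $ i + w i * (z $ (i + N) - z $ i)"
proof -
  define W where "W = mat_diag N w"
  have W: "W \<in> carrier_mat N N" by (simp add: W_def)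
  note h = halves[of z]
  have "M w *\<^sub>v z = four_block_mat (L1 + W) (- W) (- W) (L2 + W) *\<^sub>v (fst_half z @\<^sub>v snd_half z)"
    unfolding multiplex_laplacian_def Let_def W_def using halves_append[OF z] by simp
  also have "\<dots> = ((L1 + W) *\<^sub>v fst_half z + (- W) *\<^sub>v snd_half z) @\<^sub>v
                   ((- W) *\<^sub>v fst_half z + (L2 + W) *\<^sub>v snd_half z)"
    by (rule four_block_mat_mult_vec) (use L1 L2 W h in auto)
  finally have e: "M w *\<^sub>v z = ((L1 + W) *\<^sub>v fst_half z + (- W) *\<^sub>v snd_half z) @\<^sub>v
                   ((- W) *\<^sub>v fst_half z + (L2 + W) *\<^sub>v snd_half z)" .
  have c1: "(L2 + W) *\<^sub>v snd_half z = L2 *\<^sub>v snd_half z + W *\<^sub>v snd_half z"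
    by (rule add_mult_distrib_mat_vec[OF L2 W h(2)])
  have c2: "(- W) *\<^sub>v fst_half z = - (W *\<^sub>v fst_half z)"
    by (rule uminus_mult_mat_vec) (use W h in simp)
  have d1: "dim_vec ((L1 + W) *\<^sub>v fst_half z + (- W) *\<^sub>v snd_half z) = N" using L1 W h by simp
  have d2: "dim_vec ((- W) *\<^sub>v fst_half z + (L2 + W) *\<^sub>v snd_half z) = N" using L2 W h by simp
  have "(M w *\<^sub>v z) $ (i + N) = ((- W) *\<^sub>v fst_half z + (L2 + W) *\<^sub>v snd_half z) $ i"
    unfolding e using i d1 d2 by (subst index_append_vec(1)) (auto simp: d1)
  also have "\<dots> = - (W *\<^sub>v fst_half z) $ i + (L2 *\<^sub>v snd_half z) $ i + (W *\<^sub>v snd_half z) $ i"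
    unfolding c1 c2 using i L2 W h by simp
  also have "\<dots> = (L2 *\<^sub>v snd_half z) $ i + w i * (z $ (i + N) - z $ i)"
    using i h by (simp add: W_def mat_diag_mult_vec fst_half_def snd_half_def algebra_simps)
  finally show ?thesis .
qed

lemma M_qf:
  assumes z: "z \<in> carrier_vec (N+N)"
  shows "z \<bullet> (M w *\<^sub>v z) = fst_half z \<bullet> (L1 *\<^sub>v fst_half z) + snd_half z \<bullet> (L2 *\<^sub>v snd_half z)
           + (\<Sum>i<N. w i * (z $ i - z $ (i + N))^2)"
proof -
  have dim: "dim_vec (M w *\<^sub>v z) = N+N" using M_carrier[of w] by simp
  have "z \<bullet> (M w *\<^sub>v z) = (\<Sum>i<N+N. z $ i * (M w *\<^sub>v z) $ i)"
    by (simp only: scalar_prod_def dim atLeast0LessThan)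
  also have "\<dots> = (\<Sum>i<N. z $ i * (M w *\<^sub>v z) $ i) + (\<Sum>i<N. z $ (i + N) * (M w *\<^sub>v z) $ (i + N))"
    by (rule sum_split_double)
  also have "\<dots> = (\<Sum>i<N. z $ i * ((L1 *\<^sub>v fst_half z) $ i + w i * (z $ i - z $ (i + N))))
       + (\<Sum>i<N. z $ (i + N) * ((L2 *\<^sub>v snd_half z) $ i + w i * (z $ (i + N) - z $ i)))"
    using M_apply_fst[OF z] M_apply_snd[OF z] by simp
  also have "\<dots> = (\<Sum>i<N. z $ i * ((L1 *\<^sub>v fst_half z) $ i + w i * (z $ i - z $ (i + N)))
       + z $ (i + N) * ((L2 *\<^sub>v snd_half z) $ i + w i * (z $ (i + N) - z $ i)))"
    by (simp only: sum.distrib)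
  also have "\<dots> = (\<Sum>i<N. fst_half z $ i * (L1 *\<^sub>v fst_half z) $ i
       + snd_half z $ i * (L2 *\<^sub>v snd_half z) $ i + w i * (z $ i - z $ (i + N))^2)"
    by (intro sum.cong refl) (simp add: fst_half_def snd_half_def algebra_simps power2_eq_square)
  also have "\<dots> = (\<Sum>i<N. fst_half z $ i * (L1 *\<^sub>v fst_half z) $ i)
       + (\<Sum>i<N. snd_half z $ i * (L2 *\<^sub>v snd_half z) $ i)
       + (\<Sum>i<N. w i * (z $ i - z $ (i + N))^2)"
    by (simp only: sum.distrib)
  also have "\<dots> = fst_half z \<bullet> (L1 *\<^sub>v fst_half z) + snd_half z \<bullet> (L2 *\<^sub>v snd_half z)
           + (\<Sum>i<N. w i * (z $ i - z $ (i + N))^2)"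
    using L1 L2 by (simp add: scalar_prod_def atLeast0LessThan fst_half_def snd_half_def)
  finally show ?thesis .
qed

lemma halves_sq: assumes z: "z \<in> carrier_vec (N+N)"
  shows "z \<bullet> z = fst_half z \<bullet> fst_half z + snd_half z \<bullet> snd_half z"
proof -
  have "z \<bullet> z = (\<Sum>i<N+N. z $ i * z $ i)" using z by (simp add: scalar_prod_def atLeast0LessThan)
  also have "\<dots> = (\<Sum>i<N. z $ i * z $ i) + (\<Sum>i<N. z $ (i + N) * z $ (i + N))" by (rule sum_split_double)
  finally show ?thesis by (simp add: scalar_prod_def atLeast0LessThan fst_half_def snd_half_def)
qed

end




lemma proj_bound:
  fixes z u :: "real vec"
  assumes z: "z \<in> carrier_vec n" and u: "u \<in> carrier_vec n" and uu: "u \<bullet> u > 0"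
    and ij: "i < n" "j < n" "i \<noteq> j" and ui: "u $ i = 0" "u $ j = 0"
  shows "(z $ i - z $ j)^2 \<le> 2 * (z \<bullet> z - (z \<bullet> u)^2 / (u \<bullet> u))"
proof -
  define t where "t = (z \<bullet> u) / (u \<bullet> u)"
  define p where "p = (\<lambda>k. z $ k - t * u $ k)"
  have zz: "z \<bullet> z = (\<Sum>k<n. z $ k * z $ k)" using z by (simp add: scalar_prod_def atLeast0LessThan)
  have zu: "z \<bullet> u = (\<Sum>k<n. z $ k * u $ k)" using u by (simp add: scalar_prod_def atLeast0LessThan)
  have uu': "u \<bullet> u = (\<Sum>k<n. u $ k * u $ k)" using u by (simp add: scalar_prod_def atLeast0LessThan)
  have "(\<Sum>k<n. (p k)^2) = (\<Sum>k<n. z $ k * z $ k - 2 * t * (z $ k * u $ k) + t * t * (u $ k * u $ k))"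
    by (intro sum.cong refl) (simp add: p_def power2_eq_square algebra_simps)
  also have "\<dots> = z \<bullet> z - 2 * t * (z \<bullet> u) + t * t * (u \<bullet> u)"
    unfolding zz zu uu' by (simp add: sum.distrib sum_subtractf sum_distrib_left)
  also have "\<dots> = z \<bullet> z - (z \<bullet> u)^2 / (u \<bullet> u)"
    using uu by (simp add: t_def field_simps power2_eq_square)
  finally have pp: "(\<Sum>k<n. (p k)^2) = z \<bullet> z - (z \<bullet> u)^2 / (u \<bullet> u)" .
  have "(p i)^2 + (p j)^2 = (\<Sum>k\<in>{i,j}. (p k)^2)" using ij by simp
  also have "\<dots> \<le> (\<Sum>k<n. (p k)^2)" using ij by (intro sum_mono2) auto
  finally have le: "(p i)^2 + (p j)^2 \<le> z \<bullet> z - (z \<bullet> u)^2 / (u \<bullet> u)" using pp by simp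
  have "(z $ i - z $ j)^2 \<le> 2 * ((z $ i)^2 + (z $ j)^2)"
    using sum_squares_ge_zero[of "z $ i + z $ j" 0] by (simp add: power2_eq_square algebra_simps)
  moreover have "p i = z $ i" "p j = z $ j" using ui by (auto simp: p_def)
  ultimately have "(z $ i)^2 + (z $ j)^2 \<le> z \<bullet> z - (z \<bullet> u)^2 / (u \<bullet> u)" using le by simp
  then have "2 * ((z $ i)^2 + (z $ j)^2) \<le> 2 * (z \<bullet> z - (z \<bullet> u)^2 / (u \<bullet> u))" by simp
  with \<open>(z $ i - z $ j)^2 \<le> 2 * ((z $ i)^2 + (z $ j)^2)\<close> show ?thesis by (rule order_trans)
qed

lemma index_mat_vec_sum:
  fixes A :: "real mat"
  assumes "A \<in> carrier_mat n m" "x \<in> carrier_vec m" "i < n"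
  shows "(A *\<^sub>v x) $ i = (\<Sum>j<m. A $$ (i, j) * x $ j)"
  using assms by (simp add: mult_mat_vec_def scalar_prod_def row_def atLeast0LessThan)

lemma mat_vec_uminus:
  fixes A :: "real mat"
  assumes A: "A \<in> carrier_mat n m" and x: "x \<in> carrier_vec m"
  shows "A *\<^sub>v (- x) = - (A *\<^sub>v x)"
  by (rule eq_vecI) (use A x in \<open>simp_all add: index_mat_vec_sum sum_negf[symmetric]\<close>)

context mplex
begin

definition ew :: "nat \<Rightarrow> real \<Rightarrow> nat \<Rightarrow> real" where "ew x0 c = (\<lambda>i. if i = x0 then c else 0)"

definition Q0 :: "real vec \<Rightarrow> real" where
  "Q0 z = fst_half z \<bullet> (L1 *\<^sub>v fst_half z) + snd_half z \<bullet> (L2 *\<^sub>v snd_half z)"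

lemma M_qf': assumes z: "z \<in> carrier_vec (N+N)"
  shows "z \<bullet> (M w *\<^sub>v z) = Q0 z + (\<Sum>i<N. w i * (z $ i - z $ (i + N))^2)"
  using M_qf[OF z] by (simp add: Q0_def)

lemma M_qf_ew: assumes z: "z \<in> carrier_vec (N+N)" and x0: "x0 < N"
  shows "z \<bullet> (M (ew x0 c) *\<^sub>v z) = Q0 z + c * (z $ x0 - z $ (x0 + N))^2"
proof -
  have "(\<Sum>i<N. ew x0 c i * (z $ i - z $ (i + N))^2) = (\<Sum>i<N. if i = x0 then c * (z $ x0 - z $ (x0 + N))^2 else 0)"
    by (intro sum.cong refl) (simp add: ew_def)
  also have "\<dots> = c * (z $ x0 - z $ (x0 + N))^2" using x0 by simp
  finally show ?thesis using M_qf'[OF z] by simp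
qed

lemma ew_adm: assumes "x0 < N" "c \<ge> 0" shows "admissible_weight N c (ew x0 c)"
  using assms unfolding admissible_weight_def ew_def by simp

lemma NN: "N + N > 0" using N by simp

lemma M_lmax_le_iff: "lambda_max (M w) \<le> l \<longleftrightarrow> (\<forall>z\<in>carrier_vec (N+N). z \<bullet> (M w *\<^sub>v z) \<le> l * (z \<bullet> z))"
  by (rule lmax_le_iff[OF M_carrier M_sym NN])

end

locale mainctx = mplex +
  fixes v :: "real vec" and x0 :: nat
  assumes v: "v \<in> carrier_vec N" "v \<noteq> 0\<^sub>v N" and Lv: "L1 *\<^sub>v v = lambda_max L1 \<cdot>\<^sub>v v"
    and gt: "lambda_max L2 < lambda_max L1"
    and x0: "x0 < N" "v $ x0 = 0"
begin

abbreviation l where "l \<equiv> lambda_max L1"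

definition u where "u = v @\<^sub>v 0\<^sub>v N"

lemma u: "u \<in> carrier_vec (N+N)" "u \<noteq> 0\<^sub>v (N+N)"
proof -
  show uc: "u \<in> carrier_vec (N+N)" using v by (simp add: u_def)
  obtain k where k: "k < N" "v $ k \<noteq> 0" using v by (metis eq_vecI carrier_vecD index_zero_vec)
  have "u $ k = v $ k" using k v by (simp add: u_def)
  then show "u \<noteq> 0\<^sub>v (N+N)" using k by (metis add_less_cancel_left index_zero_vec(1) less_add_same_cancel1 trans_less_add1)
qed

lemma u_halves: "fst_half u = v" "snd_half u = 0\<^sub>v N"
  by (rule eq_vecI, use v in \<open>auto simp: u_def fst_half_def snd_half_def\<close>)+

lemma u_idx: "i < N \<Longrightarrow> u $ i = v $ i" "i < N \<Longrightarrow> u $ (i + N) = 0"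
  using v by (auto simp: u_def)

lemma uu_pos: "u \<bullet> u > 0" using vec_sq_pos u by blast

lemma uu: "u \<bullet> u = v \<bullet> v" using halves_sq[OF u(1)] u_halves v by simp

lemma vv_pos: "v \<bullet> v > 0" using vec_sq_pos v by blast

lemma Q0_bound: assumes z: "z \<in> carrier_vec (N+N)"
  shows "Q0 z \<le> l * (z \<bullet> z)"
proof -
  have r1: "fst_half z \<bullet> (L1 *\<^sub>v fst_half z) \<le> l * (fst_half z \<bullet> fst_half z)"
    by (rule rayleigh_sym[OF L1 L1T N halves(1)])
  have r2: "snd_half z \<bullet> (L2 *\<^sub>v snd_half z) \<le> lambda_max L2 * (snd_half z \<bullet> snd_half z)"
    by (rule rayleigh_sym[OF L2 L2T N halves(2)])
  have "snd_half z \<bullet> snd_half z \<ge> 0" by (simp add: scalar_prod_def sum_nonneg)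
  then have "lambda_max L2 * (snd_half z \<bullet> snd_half z) \<le> l * (snd_half z \<bullet> snd_half z)"
    using gt by (simp add: mult_right_mono)
  then show ?thesis using r1 r2 halves_sq[OF z] unfolding Q0_def by (simp add: algebra_simps)
qed

lemma lower:
  assumes w: "\<forall>i<N. w i \<ge> 0"
  shows "lambda_max (M w) \<ge> l" "lambda_max (M w) \<le> l \<Longrightarrow> \<forall>i<N. w i * v $ i = 0"
proof -
  have q: "u \<bullet> (M w *\<^sub>v u) = l * (v \<bullet> v) + (\<Sum>i<N. w i * (v $ i)^2)"
  proof -
    have "0\<^sub>v N \<bullet> (L2 *\<^sub>v 0\<^sub>v N) = 0" by (rule scalar_prod_left_zero) (use L2 in simp)
    then show ?thesis using M_qf'[OF u(1)] u_idx Lv v u_halves by (simp add: Q0_def)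
  qed
  have r: "u \<bullet> (M w *\<^sub>v u) \<le> lambda_max (M w) * (v \<bullet> v)"
    using rayleigh_sym[OF M_carrier M_sym NN u(1)] uu by simp
  have s: "(\<Sum>i<N. w i * (v $ i)^2) \<ge> 0" using w by (intro sum_nonneg) auto
  have "l * (v \<bullet> v) \<le> lambda_max (M w) * (v \<bullet> v)" using q r s by linarith
  then show "lambda_max (M w) \<ge> l" using vv_pos by simp
  assume le: "lambda_max (M w) \<le> l"
  then have "lambda_max (M w) * (v \<bullet> v) \<le> l * (v \<bullet> v)" using vv_pos by simp
  then have "(\<Sum>i<N. w i * (v $ i)^2) \<le> 0" using q r by linarith
  then have z: "(\<Sum>i<N. w i * (v $ i)^2) = 0" using s by linarith
  show "\<forall>i<N. w i * v $ i = 0"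
  proof (intro allI impI)
    fix i assume i: "i < N"
    have "\<forall>j\<in>{..<N}. w j * (v $ j)^2 = 0"
      using z w by (subst sum_nonneg_eq_0_iff[symmetric]) auto
    then have "w i * (v $ i)^2 = 0" using i by simp
    then show "w i * v $ i = 0" by (simp add: power2_eq_square)
  qed
qed

lemma star_ge: assumes c: "c \<ge> 0" shows "lambda_star N L1 L2 c \<ge> l"
  unfolding lambda_star_def
proof (rule cInf_greatest)
  show "{lambda_max (M w) |w. admissible_weight N c w} \<noteq> {}" using ew_adm[OF x0(1) c] by blast
next
  fix y assume "y \<in> {lambda_max (M w) |w. admissible_weight N c w}"
  then obtain w where "y = lambda_max (M w)" "admissible_weight N c w" by blast
  then show "l \<le> y" using lower(1)[of w] unfolding admissible_weight_def by simp
qed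

lemma star_eq: assumes adm: "admissible_weight N c w" and le: "lambda_max (M w) \<le> l"
  shows "lambda_star N L1 L2 c = l" "lambda_max (M w) = l"
proof -
  have w0: "\<forall>i<N. w i \<ge> 0" using adm unfolding admissible_weight_def by simp
  show eq: "lambda_max (M w) = l" using lower(1)[OF w0] le by simp
  show "lambda_star N L1 L2 c = l"
    unfolding lambda_star_def
  proof (rule cInf_eq_minimum)
    show "l \<in> {lambda_max (M w) |w. admissible_weight N c w}" using adm eq by force
  next
    fix y assume "y \<in> {lambda_max (M w) |w. admissible_weight N c w}"
    then obtain w' where "y = lambda_max (M w')" "admissible_weight N c w'" by blast
    then show "l \<le> y" using lower(1)[of w'] unfolding admissible_weight_def by simp
  qed
qed

lemma Mu: assumes w: "\<forall>i<N. w i * v $ i = 0" shows "M w *\<^sub>v u = l \<cdot>\<^sub>v u"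
proof (rule eq_vecI)
  have dim: "dim_vec (M w *\<^sub>v u) = N + N" using M_carrier[of w] by simp
  fix i assume "i < dim_vec (l \<cdot>\<^sub>v u)"
  then have i: "i < N + N" using u by simp
  show "(M w *\<^sub>v u) $ i = (l \<cdot>\<^sub>v u) $ i"
  proof (cases "i < N")
    case True
    have "(M w *\<^sub>v u) $ i = (L1 *\<^sub>v v) $ i + w i * (v $ i - 0)"
      using M_apply_fst[OF u(1) True] u_halves u_idx True by simp
    also have "\<dots> = l * v $ i" using Lv True v w by simp
    finally show ?thesis using True u u_idx i by simp
  next
    case False
    define k where "k = i - N"
    have k: "k < N" "i = k + N" using False i by (auto simp: k_def)
    have "(M w *\<^sub>v u) $ (k + N) = (L2 *\<^sub>v 0\<^sub>v N) $ k + w k * (0 - v $ k)"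
      using M_apply_snd[OF u(1) k(1)] u_halves u_idx k by simp
    also have "\<dots> = 0" using k L2 w by (simp add: algebra_simps)
    finally show ?thesis using k u u_idx by simp
  qed
qed (use u M_carrier[of w] in simp)

definition Fz where "Fz c \<longleftrightarrow> (\<forall>z\<in>carrier_vec (N+N). z \<bullet> (M (ew x0 c) *\<^sub>v z) \<le> l * (z \<bullet> z))"

lemma g_nonneg: "(a::real)^2 \<ge> 0" by simp

lemma F0: "Fz 0"
  unfolding Fz_def using M_qf_ew[OF _ x0(1)] Q0_bound by simp

lemma Fmono: assumes "Fz c" "0 \<le> c'" "c' \<le> c" shows "Fz c'"
  unfolding Fz_def
proof
  fix z :: "real vec" assume z: "z \<in> carrier_vec (N+N)"
  have "c' * (z $ x0 - z $ (x0 + N))^2 \<le> c * (z $ x0 - z $ (x0 + N))^2"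
    using assms(3) by (intro mult_right_mono) auto
  moreover have "z \<bullet> (M (ew x0 c) *\<^sub>v z) \<le> l * (z \<bullet> z)" using assms(1) z unfolding Fz_def by blast
  ultimately show "z \<bullet> (M (ew x0 c') *\<^sub>v z) \<le> l * (z \<bullet> z)"
    unfolding M_qf_ew[OF z x0(1)] by linarith
qed

lemma main_c1:
  assumes c1: "c1 > 0" and simp_below: "\<forall>c. 0 \<le> c \<and> c < c1 \<longrightarrow> optimal_simple N L1 L2 c"
  shows "Fz c1"
proof (rule ccontr)
  assume nF: "\<not> Fz c1"
  define F where "F = {c. 0 \<le> c \<and> Fz c}"
  have bnd: "\<And>c. c \<in> F \<Longrightarrow> c < c1"
  proof (rule ccontr)
    fix c assume "c \<in> F" "\<not> c < c1"
    then have "Fz c1" using Fmono[of c c1] c1 unfolding F_def by auto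
    then show False using nF by simp
  qed
  have F0': "0 \<in> F" using F0 by (simp add: F_def)
  have bdd: "bdd_above F" using bnd by (meson bdd_above.I less_imp_le)
  define c0 where "c0 = Sup F"
  have c0_ge: "c0 \<ge> 0" unfolding c0_def using F0' bdd by (rule cSup_upper)
  have c0_up: "\<And>c. c \<in> F \<Longrightarrow> c \<le> c0" unfolding c0_def using bdd by (intro cSup_upper)
  have Fc0: "Fz c0"
    unfolding Fz_def
  proof
    fix z :: "real vec" assume z: "z \<in> carrier_vec (N+N)"
    define g where "g = (z $ x0 - z $ (x0 + N))^2"
    have g0: "g \<ge> 0" by (simp add: g_def)
    have all: "\<And>c. c \<in> F \<Longrightarrow> Q0 z + c * g \<le> l * (z \<bullet> z)"
    proof -
      fix c assume "c \<in> F"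
      then have "z \<bullet> (M (ew x0 c) *\<^sub>v z) \<le> l * (z \<bullet> z)" using z unfolding F_def Fz_def by blast
      then show "Q0 z + c * g \<le> l * (z \<bullet> z)" unfolding M_qf_ew[OF z x0(1)] g_def .
    qed
    have "Q0 z + c0 * g \<le> l * (z \<bullet> z)"
    proof (cases "g = 0")
      case True
      then show ?thesis using all[OF F0'] by simp
    next
      case False
      then have gp: "g > 0" using g0 by simp
      have "c0 \<le> (l * (z \<bullet> z) - Q0 z) / g"
        unfolding c0_def
      proof (rule cSup_least)
        show "F \<noteq> {}" using F0' by blast
        fix c assume "c \<in> F"
        then have "Q0 z + c * g \<le> l * (z \<bullet> z)" by (rule all)
        then show "c \<le> (l * (z \<bullet> z) - Q0 z) / g" using gp by (simp add: field_simps)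
      qed
      then show ?thesis using gp by (simp add: field_simps)
    qed
    then show "z \<bullet> (M (ew x0 c0) *\<^sub>v z) \<le> l * (z \<bullet> z)" using M_qf_ew[OF z x0(1)] g_def by simp
  qed
  have c0_lt: "c0 < c1" using bnd[of c0] Fc0 c0_ge by (simp add: F_def)
  define w0 where "w0 = ew x0 c0"
  have adm: "admissible_weight N c0 w0" using ew_adm[OF x0(1) c0_ge] by (simp add: w0_def)
  have le: "lambda_max (M w0) \<le> l" using Fc0 M_lmax_le_iff unfolding Fz_def w0_def by simp
  have star: "lambda_star N L1 L2 c0 = l" and lm: "lambda_max (M w0) = l" using star_eq[OF adm le] by auto
  have opt: "optimal_weight N L1 L2 c0 w0" using adm lm star by (simp add: optimal_weight_def)
  have "optimal_simple N L1 L2 c0" using simp_below c0_ge c0_lt by simp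
  then have "simple_eigenvalue (M w0) (lambda_star N L1 L2 c0)" using opt unfolding optimal_simple_def by blast
  then have ord: "Polynomial.order (lambda_max (M w0)) (char_poly (M w0)) = 1"
    unfolding simple_eigenvalue_def star lm .
  have wv: "\<forall>i<N. w0 i * v $ i = 0" using x0 by (simp add: w0_def ew_def)
  have Mu0: "M w0 *\<^sub>v u = lambda_max (M w0) \<cdot>\<^sub>v u" using Mu[OF wv] lm by simp
  obtain \<delta> where dpos: "\<delta> > 0" and gap: "\<forall>x\<in>carrier_vec (N+N).
           x \<bullet> (M w0 *\<^sub>v x) \<le> lambda_max (M w0) * (x \<bullet> x) - \<delta> * (x \<bullet> x - (x \<bullet> u)^2 / (u \<bullet> u))"
    using gap_sym[OF M_carrier M_sym NN ord u Mu0] by blast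
  have "Fz (c0 + \<delta> / 2)"
    unfolding Fz_def
  proof
    fix z :: "real vec" assume z: "z \<in> carrier_vec (N+N)"
    define g where "g = (z $ x0 - z $ (x0 + N))^2"
    have pb: "g \<le> 2 * (z \<bullet> z - (z \<bullet> u)^2 / (u \<bullet> u))"
      unfolding g_def
      by (rule proj_bound[OF z u(1) uu_pos]) (use x0 u_idx in auto)
    have "z \<bullet> (M (ew x0 (c0 + \<delta> / 2)) *\<^sub>v z) = z \<bullet> (M w0 *\<^sub>v z) + \<delta> / 2 * g"
      using M_qf_ew[OF z x0(1), of "c0 + \<delta> / 2"] M_qf_ew[OF z x0(1), of c0]
      by (simp add: w0_def g_def algebra_simps)
    also have "\<dots> \<le> l * (z \<bullet> z) - \<delta> * (z \<bullet> z - (z \<bullet> u)^2 / (u \<bullet> u)) + \<delta> / 2 * g"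
      using gap z lm by simp
    also have "\<dots> \<le> l * (z \<bullet> z)"
    proof -
      have "\<delta> / 2 * g \<le> \<delta> / 2 * (2 * (z \<bullet> z - (z \<bullet> u)^2 / (u \<bullet> u)))"
        by (rule mult_left_mono[OF pb]) (use dpos in simp)
      also have "\<dots> = \<delta> * (z \<bullet> z - (z \<bullet> u)^2 / (u \<bullet> u))" by simp
      finally show ?thesis by linarith
    qed
    finally show "z \<bullet> (M (ew x0 (c0 + \<delta> / 2)) *\<^sub>v z) \<le> l * (z \<bullet> z)" .
  qed
  then have "c0 + \<delta> / 2 \<in> F" using c0_ge dpos by (simp add: F_def)
  then have "c0 + \<delta> / 2 \<le> c0" by (rule c0_up)
  then show False using dpos by simp
qed

end




context mainctx
begin

definition Lb where "Lb = (1/2) \<cdot>\<^sub>m (L1 + L2) - l \<cdot>\<^sub>m 1\<^sub>m N"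
definition Lt where "Lt = (1/2) \<cdot>\<^sub>m (L1 - L2)"

lemma Lb_carrier: "Lb \<in> carrier_mat N N" unfolding Lb_def by (rule minus_carrier_mat) simp
lemma Lt_carrier: "Lt \<in> carrier_mat N N" unfolding Lt_def by (intro smult_carrier_mat minus_carrier_mat L2)

lemma Lb_apply: assumes x: "x \<in> carrier_vec N" and i: "i < N"
  shows "(Lb *\<^sub>v x) $ i = (1/2) * ((L1 *\<^sub>v x) $ i + (L2 *\<^sub>v x) $ i) - l * x $ i"
proof -
  have "(Lb *\<^sub>v x) $ i = (\<Sum>j<N. Lb $$ (i, j) * x $ j)" by (rule index_mat_vec_sum[OF Lb_carrier x i])
  also have "\<dots> = (\<Sum>j<N. (1/2) * (L1 $$ (i, j) * x $ j) + (1/2) * (L2 $$ (i, j) * x $ j)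
                     - (if i = j then l * x $ j else 0))"
    by (intro sum.cong refl) (use L1 L2 i in \<open>auto simp: Lb_def algebra_simps\<close>)
  also have "\<dots> = (1/2) * (\<Sum>j<N. L1 $$ (i, j) * x $ j) + (1/2) * (\<Sum>j<N. L2 $$ (i, j) * x $ j) - l * x $ i"
    using i by (simp add: sum.distrib sum_subtractf sum_distrib_left)
  also have "\<dots> = (1/2) * ((L1 *\<^sub>v x) $ i + (L2 *\<^sub>v x) $ i) - l * x $ i"
    using index_mat_vec_sum[OF L1 x i] index_mat_vec_sum[OF L2 x i] by (simp add: algebra_simps)
  finally show ?thesis .
qed

lemma Lt_apply: assumes x: "x \<in> carrier_vec N" and i: "i < N"
  shows "(Lt *\<^sub>v x) $ i = (1/2) * ((L1 *\<^sub>v x) $ i - (L2 *\<^sub>v x) $ i)"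
proof -
  have "(Lt *\<^sub>v x) $ i = (\<Sum>j<N. Lt $$ (i, j) * x $ j)" by (rule index_mat_vec_sum[OF Lt_carrier x i])
  also have "\<dots> = (\<Sum>j<N. (1/2) * (L1 $$ (i, j) * x $ j) - (1/2) * (L2 $$ (i, j) * x $ j))"
    by (intro sum.cong refl) (use L1 L2 i in \<open>auto simp: Lt_def algebra_simps\<close>)
  also have "\<dots> = (1/2) * (\<Sum>j<N. L1 $$ (i, j) * x $ j) - (1/2) * (\<Sum>j<N. L2 $$ (i, j) * x $ j)"
    by (simp add: sum_subtractf sum_distrib_left)
  also have "\<dots> = (1/2) * ((L1 *\<^sub>v x) $ i - (L2 *\<^sub>v x) $ i)"
    using index_mat_vec_sum[OF L1 x i] index_mat_vec_sum[OF L2 x i] by (simp add: algebra_simps)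
  finally show ?thesis .
qed

lemma sp_sum: assumes "x \<in> carrier_vec N" "y \<in> carrier_vec N"
  shows "x \<bullet> y = (\<Sum>i<N. x $ i * y $ i)"
  using assms by (simp add: scalar_prod_def atLeast0LessThan)

lemma Lb_inj: assumes x: "x \<in> carrier_vec N" and z: "Lb *\<^sub>v x = 0\<^sub>v N" shows "x = 0\<^sub>v N"
proof (rule ccontr)
  assume nz: "x \<noteq> 0\<^sub>v N"
  have xx: "x \<bullet> x > 0" using vec_sq_pos[OF x nz] .
  have L1x: "L1 *\<^sub>v x \<in> carrier_vec N" "L2 *\<^sub>v x \<in> carrier_vec N" "Lb *\<^sub>v x \<in> carrier_vec N"
    using L1 L2 Lb_carrier x by auto
  have "x \<bullet> (Lb *\<^sub>v x) = (\<Sum>i<N. x $ i * (Lb *\<^sub>v x) $ i)" using sp_sum[OF x L1x(3)] .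
  also have "\<dots> = (\<Sum>i<N. (1/2) * (x $ i * (L1 *\<^sub>v x) $ i) + (1/2) * (x $ i * (L2 *\<^sub>v x) $ i) - l * (x $ i * x $ i))"
    by (intro sum.cong refl) (simp add: Lb_apply[OF x] algebra_simps)
  also have "\<dots> = (1/2) * (x \<bullet> (L1 *\<^sub>v x)) + (1/2) * (x \<bullet> (L2 *\<^sub>v x)) - l * (x \<bullet> x)"
    using sp_sum[OF x L1x(1)] sp_sum[OF x L1x(2)] sp_sum[OF x x]
    by (simp add: sum.distrib sum_subtractf sum_distrib_left)
  finally have e: "x \<bullet> (Lb *\<^sub>v x) = (1/2) * (x \<bullet> (L1 *\<^sub>v x)) + (1/2) * (x \<bullet> (L2 *\<^sub>v x)) - l * (x \<bullet> x)" .
  have "x \<bullet> (Lb *\<^sub>v x) = 0" using z x by simp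
  moreover have "x \<bullet> (L1 *\<^sub>v x) \<le> l * (x \<bullet> x)" by (rule rayleigh_sym[OF L1 L1T N x])
  moreover have "x \<bullet> (L2 *\<^sub>v x) \<le> lambda_max L2 * (x \<bullet> x)" by (rule rayleigh_sym[OF L2 L2T N x])
  moreover have "lambda_max L2 * (x \<bullet> x) < l * (x \<bullet> x)" using gt xx by simp
  ultimately show False using e by linarith
qed

lemma Lb_inverse: "\<exists>B\<in>carrier_mat N N. B * Lb = 1\<^sub>m N \<and> Lb * B = 1\<^sub>m N"
proof -
  have "det Lb \<noteq> 0"
    unfolding det_0_iff_vec_prod_zero[OF Lb_carrier] using Lb_inj by blast
  from det_non_zero_imp_unit[OF Lb_carrier this, of "()"]
  show ?thesis unfolding Units_def ring_mat_def by auto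
qed

lemma pinv_Lb: assumes B: "B \<in> carrier_mat N N" "B * Lb = 1\<^sub>m N" "Lb * B = 1\<^sub>m N"
  shows "pinv Lb = B"
  unfolding pinv_def
proof (rule the_equality)
  have Lb: "Lb \<in> carrier_mat N N" by (rule Lb_carrier)
  show "B \<in> carrier_mat (dim_col Lb) (dim_row Lb) \<and> Lb * B * Lb = Lb \<and> B * Lb * B = B \<and>
        transpose_mat (Lb * B) = Lb * B \<and> transpose_mat (B * Lb) = B * Lb"
    using B Lb by simp
next
  fix X assume X: "X \<in> carrier_mat (dim_col Lb) (dim_row Lb) \<and> Lb * X * Lb = Lb \<and> X * Lb * X = X \<and>
        transpose_mat (Lb * X) = Lb * X \<and> transpose_mat (X * Lb) = X * Lb"
  have Lb: "Lb \<in> carrier_mat N N" by (rule Lb_carrier)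
  have Xc: "X \<in> carrier_mat N N" using X Lb by simp
  have XL: "Lb * X * Lb = Lb" using X by blast
  have "X = 1\<^sub>m N * X * 1\<^sub>m N" using Xc by simp
  also have "\<dots> = (B * Lb) * X * (Lb * B)" by (simp only: B(2) B(3))
  also have "\<dots> = B * (Lb * X * Lb) * B"
    using B(1) Xc Lb by (simp add: assoc_mult_mat[of _ N N _ N _ N])
  also have "\<dots> = B * Lb * B" by (simp only: XL)
  also have "\<dots> = 1\<^sub>m N * B" by (simp only: B(2))
  also have "\<dots> = B" using B(1) by simp
  finally show "X = B" .
qed

lemma final: assumes ws: "\<forall>i<N. ws i * v $ i = 0"
  shows "eigenvalue (Lb - Lt * pinv Lb * Lt + 2 \<cdot>\<^sub>m mat_diag N ws) 0"
proof -
  obtain B where B: "B \<in> carrier_mat N N" "B * Lb = 1\<^sub>m N" "Lb * B = 1\<^sub>m N" using Lb_inverse by blast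
  have pB: "pinv Lb = B" by (rule pinv_Lb[OF B])
  have Lb: "Lb \<in> carrier_mat N N" by (rule Lb_carrier)
  have Lt: "Lt \<in> carrier_mat N N" by (rule Lt_carrier)
  have Ltv: "Lt *\<^sub>v v = - (Lb *\<^sub>v v)"
  proof (rule eq_vecI)
    fix i assume "i < dim_vec (- (Lb *\<^sub>v v))"
    then have i: "i < N" using Lb by simp
    have "(L1 *\<^sub>v v) $ i = l * v $ i" using Lv i v by simp
    then show "(Lt *\<^sub>v v) $ i = (- (Lb *\<^sub>v v)) $ i"
      using Lt_apply[OF v(1) i] Lb_apply[OF v(1) i] i Lb by (simp add: algebra_simps)
  qed (use Lb Lt in simp)
  have BLtv: "B *\<^sub>v (Lt *\<^sub>v v) = - v"
  proof -
    have "B *\<^sub>v (Lt *\<^sub>v v) = - (B *\<^sub>v (Lb *\<^sub>v v))" unfolding Ltv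
      by (rule mat_vec_uminus[OF B(1)]) (use Lb v in simp)
    also have "B *\<^sub>v (Lb *\<^sub>v v) = (B * Lb) *\<^sub>v v" using B(1) Lb v by (simp add: assoc_mult_mat_vec[of _ N N _ N])
    also have "(B * Lb) *\<^sub>v v = v" using B(2) v by simp
    finally show ?thesis .
  qed
  have LBL: "(Lt * B * Lt) *\<^sub>v v = Lb *\<^sub>v v"
  proof -
    have "(Lt * B * Lt) *\<^sub>v v = Lt *\<^sub>v (B *\<^sub>v (Lt *\<^sub>v v))"
      using Lt B v by (simp add: assoc_mult_mat_vec[of _ N N _ N])
    also have "\<dots> = - (Lt *\<^sub>v v)" unfolding BLtv by (rule mat_vec_uminus[OF Lt v(1)])
    also have "\<dots> = Lb *\<^sub>v v" unfolding Ltv by simp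
    finally show ?thesis .
  qed
  define A where "A = Lb - Lt * pinv Lb * Lt + 2 \<cdot>\<^sub>m mat_diag N ws"
  have Qc: "Lb - Lt * B * Lt \<in> carrier_mat N N" by (rule minus_carrier_mat) (use Lt B in simp)
  have Wc: "2 \<cdot>\<^sub>m mat_diag N ws \<in> carrier_mat N N" by simp
  have A: "A \<in> carrier_mat N N" using Qc by (simp add: A_def pB)
  have "A *\<^sub>v v = (Lb - Lt * B * Lt) *\<^sub>v v + (2 \<cdot>\<^sub>m mat_diag N ws) *\<^sub>v v"
    unfolding A_def pB by (rule add_mult_distrib_mat_vec[OF Qc Wc v(1)])
  also have "(Lb - Lt * B * Lt) *\<^sub>v v = Lb *\<^sub>v v - (Lt * B * Lt) *\<^sub>v v"
    by (rule minus_mult_distrib_mat_vec) (use Lb Lt B v in auto)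
  finally have Av: "A *\<^sub>v v = Lb *\<^sub>v v - Lb *\<^sub>v v + (2 \<cdot>\<^sub>m mat_diag N ws) *\<^sub>v v" unfolding LBL .
  have A0: "A *\<^sub>v v = 0 \<cdot>\<^sub>v v"
  proof (rule eq_vecI)
    fix i assume "i < dim_vec (0 \<cdot>\<^sub>v v)"
    then have i: "i < N" using v by simp
    have "((2 \<cdot>\<^sub>m mat_diag N ws) *\<^sub>v v) $ i = (\<Sum>j<N. (2 \<cdot>\<^sub>m mat_diag N ws) $$ (i, j) * v $ j)"
      by (rule index_mat_vec_sum[OF Wc v(1) i])
    also have "\<dots> = (\<Sum>j<N. (if i = j then 2 * ws j else 0) * v $ j)"
      by (intro sum.cong refl) (use i in \<open>simp add: mat_diag_def\<close>)
    also have "\<dots> = 2 * ws i * v $ i" using i by (simp add: sum_delta_mult)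
    also have "\<dots> = 0" using ws i by simp
    finally have "((2 \<cdot>\<^sub>m mat_diag N ws) *\<^sub>v v) $ i = 0" .
    then show "(A *\<^sub>v v) $ i = (0 \<cdot>\<^sub>v v) $ i" unfolding Av using i carrier_matD[OF Lb] carrier_matD[OF Wc] v by simp
  qed (use A v in simp)
  have "eigenvector A v 0" unfolding eigenvector_def using A v A0 by simp
  then show ?thesis unfolding eigenvalue_def A_def by blast
qed

end

lemma laplacian_carrier: "graph_laplacian N E \<in> carrier_mat N N"
  by (simp add: graph_laplacian_def)

lemma laplacian_sym: assumes "simple_graph N E" shows "transpose_mat (graph_laplacian N E) = graph_laplacian N E"
  using assms by (intro eq_matI) (auto simp: graph_laplacian_def simple_graph_def)


theorem mainTheorem6:
  fixes N :: nat and E1 E2 :: "nat \<Rightarrow> nat \<Rightarrow> bool"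
    and v :: "real vec" and c1 :: real and wstar :: "nat \<Rightarrow> real"
  defines "L1 \<equiv> graph_laplacian N E1"
      and "L2 \<equiv> graph_laplacian N E2"
  defines "lam1 \<equiv> lambda_max L1"
  defines "Lbar \<equiv> (1/2) \<cdot>\<^sub>m (L1 + L2) - lam1 \<cdot>\<^sub>m 1\<^sub>m N"
      and "Ltil \<equiv> (1/2) \<cdot>\<^sub>m (L1 - L2)"
  defines "Q \<equiv> Lbar - Ltil * pinv Lbar * Ltil"
  assumes G1: "simple_graph N E1" and G2: "simple_graph N E2"
    and gt: "lambda_max L1 > lambda_max L2"
    and simple1: "simple_eigenvalue L1 lam1"
    and ev: "eigenvector L1 v lam1"
    and nodal: "\<exists>x<N. v $ x = 0"
    and c1_pos: "c1 > 0"
    and c1_simple: "\<forall>c. 0 \<le> c \<and> c < c1 \<longrightarrow> optimal_simple N L1 L2 c"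
    and c1_largest: "\<forall>d > c1. \<exists>c. c1 \<le> c \<and> c < d \<and> \<not> optimal_simple N L1 L2 c"
    and opt: "optimal_weight N L1 L2 c1 wstar"
  shows "eigenvalue (Q + 2 \<cdot>\<^sub>m mat_diag N wstar) 0"
proof -
  have L1c: "L1 \<in> carrier_mat N N" unfolding L1_def by (rule laplacian_carrier)
  have L2c: "L2 \<in> carrier_mat N N" unfolding L2_def by (rule laplacian_carrier)
  have L1T: "transpose_mat L1 = L1" unfolding L1_def by (rule laplacian_sym[OF G1])
  have L2T: "transpose_mat L2 = L2" unfolding L2_def by (rule laplacian_sym[OF G2])
  obtain x0 where x0: "x0 < N" "v $ x0 = 0" using nodal by blast
  have Npos: "N > 0" using x0 by simp
  have vv: "v \<in> carrier_vec N" "v \<noteq> 0\<^sub>v N" "L1 *\<^sub>v v = lambda_max L1 \<cdot>\<^sub>v v"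
    using ev L1c unfolding eigenvector_def lam1_def by auto
  interpret mc: mainctx N L1 L2 v x0
    by (unfold_locales) (use Npos L1c L2c L1T L2T vv gt x0 in auto)
  have "mc.Fz c1" by (rule mc.main_c1[OF c1_pos c1_simple])
  then have le: "lambda_max (multiplex_laplacian N L1 L2 (mc.ew x0 c1)) \<le> lambda_max L1"
    using mc.M_lmax_le_iff unfolding mc.Fz_def by simp
  have st: "lambda_star N L1 L2 c1 = lambda_max L1"
    by (rule mc.star_eq(1)[OF mc.ew_adm[OF x0(1)] le]) (use c1_pos in simp)
  have adm: "admissible_weight N c1 wstar" and lw: "lambda_max (multiplex_laplacian N L1 L2 wstar) = lambda_star N L1 L2 c1"
    using opt unfolding optimal_weight_def by auto
  have w0: "\<forall>i<N. wstar i \<ge> 0" using adm unfolding admissible_weight_def by simp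
  have ws: "\<forall>i<N. wstar i * v $ i = 0" using mc.lower(2)[OF w0] lw st by simp
  have "eigenvalue (mc.Lb - mc.Lt * pinv mc.Lb * mc.Lt + 2 \<cdot>\<^sub>m mat_diag N wstar) 0"
    by (rule mc.final[OF ws])
  moreover have "Lbar = mc.Lb" unfolding Lbar_def mc.Lb_def lam1_def ..
  moreover have "Ltil = mc.Lt" unfolding Ltil_def mc.Lt_def ..
  ultimately show ?thesis unfolding Q_def by simp
qed

end
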